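(* Let $\delta\in(0,1/2)$, let $V$ be a finite set of $[-1,1]$-valued trees of depth $n$, let $\mathbf{p}$ be a $[\delta,1-\delta]$-valued tree of depth $n$, and let $c>0$. Then $$\mathbb{E}_y\max_{\mathbf{v}\in V}\Big[\sum_{t=1}^n\eta(\mathbf{p}_t(y),y_t)\mathbf{v}_t(y)-c\,\mathbf{v}_t(y)^2\Big]\le\frac{\log|V|}{\delta\log(1+\frac c2)},$$ where $y_t\mid y_1,\dots,y_{t-1}\sim\mathrm{Bernoulli}(\mathbf{p}_t(y_1,\dots,y_{t-1}))$. Furthermore, the same upper bound holds if $\mathbf{p}$ is any $[0,1]$-valued tree but the summation is restricted to $\{t:\mathbf{p}_t(y)\in[\delta,1-\delta]\}$.
   Context: A $\mathcal{Z}$-valued tree $\mathbf{z}$ of depth $n$ is a sequence of maps $\mathbf{z}_t:\{0,1\}^{t-1}\to\mathcal{Z}$, $t=1,\dots,n$; for $y\in\{0,1\}^n$, $\mathbf{z}_t(y)=\mathbf{z}_t(y_1,\dots,y_{t-1})$. $\eta(p,a)=-\mathbf{1}\{a=1\}p^{-1}+\mathbf{1}\{a=0\}(1-p)^{-1}$. Bernoulli$(p)$ means the $\{0,1\}$-valued variable equal to $1$ with probability $p$. *)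

theory Defs
  imports Complex_Main
begin

text \<open>A Z-valued tree of depth n is represented as z :: nat => bool list => 'z,
  where (0-indexed) the t-th map, t < n, is z t applied to prefixes of length t
  (True encodes 1, False encodes 0). Thus z_{t+1}(y) in the paper is z t (take t y).\<close>

definition tree_dom :: "nat \<Rightarrow> nat \<Rightarrow> bool list \<Rightarrow> bool" where
  "tree_dom n t ys \<longleftrightarrow> t < n \<and> length ys = t"

text \<open>Canonical real tree with values in [a,b]: values in [a,b] on the domain, 0 outside
  (so that distinct elements of a set of trees are distinct as trees).\<close>
definition real_tree :: "nat \<Rightarrow> real \<Rightarrow> real \<Rightarrow> (nat \<Rightarrow> bool list \<Rightarrow> real) \<Rightarrow> bool" where
  "real_tree n a b z \<longleftrightarrow>
     (\<forall>t ys. tree_dom n t ys \<longrightarrow> a \<le> z t ys \<and> z t ys \<le> b) \<and>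
     (\<forall>t ys. \<not> tree_dom n t ys \<longrightarrow> z t ys = 0)"

definition eta :: "real \<Rightarrow> bool \<Rightarrow> real" where
  "eta p a = (if a then - inverse p else inverse (1 - p))"

definition path_prob :: "nat \<Rightarrow> (nat \<Rightarrow> bool list \<Rightarrow> real) \<Rightarrow> bool list \<Rightarrow> real" where
  "path_prob n p y = (\<Prod>t<n. if y ! t then p t (take t y) else 1 - p t (take t y))"

definition tree_expect :: "nat \<Rightarrow> (nat \<Rightarrow> bool list \<Rightarrow> real) \<Rightarrow> (bool list \<Rightarrow> real) \<Rightarrow> real" where
  "tree_expect n p f = (\<Sum>y\<in>{y. length y = n}. path_prob n p y * f y)"

end

theory Submission
  imports Defs
begin


lemma exp_neg_bound:
  fixes u :: real assumes "u \<le> 0" shows "exp u \<le> 1 + u + u^2/2"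
proof -
  let ?f = "\<lambda>x::real. 1 + x + x^2/2 - exp x"
  have "?f 0 \<le> ?f u"
  proof (rule DERIV_nonpos_imp_nonincreasing[OF assms])
    fix x :: real
    show "\<exists>y. DERIV ?f x :> y \<and> y \<le> 0"
      by (rule exI[of _ "1 + x - exp x"]) (auto intro!: derivative_eq_intros simp: exp_ge_add_one_self)
  qed
  thus ?thesis by simp
qed

lemma exp_half_bound:
  fixes u :: real assumes "0 \<le> u" shows "1 + u + u^2/2 \<le> exp u"
proof -
  let ?f = "\<lambda>x::real. exp x - 1 - x - x^2/2"
  have "?f 0 \<le> ?f u"
  proof (rule DERIV_nonneg_imp_nondecreasing[OF assms])
    fix x :: real
    show "\<exists>y. DERIV ?f x :> y \<and> y \<ge> 0"
      proof (intro exI conjI)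
      show "DERIV ?f x :> exp x - 1 - x" by (auto intro!: derivative_eq_intros)
      show "0 \<le> exp x - 1 - x" using exp_ge_add_one_self[of x] by linarith
    qed
  qed
  thus ?thesis by simp
qed

lemma exp_pos_bound:
  fixes u L :: real assumes "0 \<le> u" "u \<le> L" "0 < L"
  shows "exp u \<le> 1 + u + u^2 * ((exp L - 1 - L) / L^2)"
proof -
  let ?a = "\<lambda>x::real. \<lambda>n. inverse (fact (n + 2)) * (x ^ (n + 2))"
  have sL: "summable (?a L)"
    using summable_exp[of L, THEN summable_ignore_initial_segment, of 2] by simp
  have su: "summable (?a u)"
    using summable_exp[of u, THEN summable_ignore_initial_segment, of 2] by simp
  have eu: "exp u = 1 + u + suminf (?a u)" using exp_first_two_terms[of u] by simp
  have eL: "exp L = 1 + L + suminf (?a L)" using exp_first_two_terms[of L] by simp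
  have "suminf (?a u) \<le> suminf (\<lambda>n. ?a L n * (u^2 / L^2))"
  proof (rule suminf_le)
    fix n
    have "u ^ (n+2) = u^2 * u^n" by (simp only: power_add mult.commute)
    also have "\<dots> \<le> u^2 * L^n" using assms by (intro mult_left_mono power_mono) auto
    also have "\<dots> = L^(n+2) * (u^2/L^2)"
    proof -
      have "L^(n+2) = L^n * L^2" by (simp only: power_add)
      moreover have "L^2 \<noteq> 0" using assms by simp
      ultimately show ?thesis by (simp add: field_simps)
    qed
    finally have h: "u^(n+2) \<le> L^(n+2) * (u^2/L^2)" .
    show "?a u n \<le> ?a L n * (u^2 / L^2)"
      using mult_left_mono[OF h, of "inverse (fact (n+2))"] by (simp add: mult.assoc)
  next
    show "summable (?a u)" by (rule su)
    show "summable (\<lambda>n. ?a L n * (u^2 / L^2))" by (rule summable_mult2[OF sL])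
  qed
  also have "\<dots> = suminf (?a L) * (u^2/L^2)" by (rule suminf_mult2[OF sL, symmetric])
  finally have "suminf (?a u) \<le> suminf (?a L) * (u^2/L^2)" .
  moreover have "suminf (?a L) = exp L - 1 - L" using eL by simp
  ultimately show ?thesis using eu by (simp add: mult.commute)
qed


lemma exp_quad_bound:
  fixes u L :: real assumes "\<bar>u\<bar> \<le> L" "0 < L"
  shows "exp u \<le> 1 + u + u^2 * ((exp L - 1 - L) / L^2)"
proof (cases "0 \<le> u")
  case True thus ?thesis using exp_pos_bound assms by auto
next
  case False
  have "1/2 \<le> (exp L - 1 - L) / L^2" using exp_half_bound[of L] assms by (simp add: field_simps)
  hence "u^2 * (1/2) \<le> u^2 * ((exp L - 1 - L) / L^2)"
    by (rule mult_left_mono) simp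
  hence "u^2/2 \<le> u^2 * ((exp L - 1 - L) / L^2)" by simp
  thus ?thesis using exp_neg_bound[of u] False by linarith
qed

lemma ln_lower: fixes c :: real assumes "0 < c" shows "c \<le> (2 + c) * ln (1 + c/2)"
proof -
  have pos: "0 < 1 + c/2" using assms by simp
  have "ln (inverse (1 + c/2)) \<le> inverse (1 + c/2) - 1" using ln_le_minus_one pos by simp
  hence "- ln (1 + c/2) \<le> inverse (1 + c/2) - 1" using ln_inverse pos by simp
  hence "1 - inverse (1 + c/2) \<le> ln (1 + c/2)" by simp
  moreover have "1 - inverse (1 + c/2) = c / (2 + c)" using pos by (simp add: field_simps)
  ultimately have "c / (2+c) \<le> ln (1 + c/2)" by simp
  thus ?thesis using assms by (simp add: field_simps)
qed

lemma key_step: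
  fixes \<delta> p v c :: real
  assumes d0: "0 < \<delta>" and d1: "\<delta> < 1/2" and p0: "\<delta> \<le> p" and p1: "p \<le> 1 - \<delta>"
    and v: "\<bar>v\<bar> \<le> 1" and c: "0 < c"
  shows "p * exp ((\<delta> * ln (1 + c/2)) * (- inverse p * v - c * v^2))
       + (1 - p) * exp ((\<delta> * ln (1 + c/2)) * (inverse (1 - p) * v - c * v^2)) \<le> 1"
proof -
  define L where "L = ln (1 + c/2)"
  define lam where "lam = \<delta> * L"
  define K where "K = (exp L - 1 - L) / L^2"
  have L0: "0 < L" unfolding L_def using c by simp
  have eL: "exp L = 1 + c/2" unfolding L_def using c by simp
  have lam0: "0 < lam" unfolding lam_def using d0 L0 by simp
  have pp: "0 < p" "0 < 1 - p" using d0 p0 p1 by auto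
  define u1 where "u1 = - (lam * v / p)"
  define u2 where "u2 = lam * v / (1 - p)"
  have "\<bar>lam * v / p\<bar> \<le> L"
  proof -
    have e: "\<bar>lam * v / p\<bar> = L * (\<delta> * \<bar>v\<bar> / p)" unfolding lam_def using pp L0 d0
      by (simp add: abs_mult abs_divide)
    have "\<delta> * \<bar>v\<bar> \<le> \<delta>" using v d0 by (simp add: mult_left_le)
    hence "\<delta> * \<bar>v\<bar> \<le> p" using p0 by linarith
    hence "\<delta> * \<bar>v\<bar> / p \<le> 1" using pp by (simp add: divide_le_eq)
    hence "L * (\<delta> * \<bar>v\<bar> / p) \<le> L * 1" using L0 by (intro mult_left_mono) auto
    thus ?thesis using e by simp
  qed
  hence u1L: "\<bar>u1\<bar> \<le> L" unfolding u1_def by simp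
  have u2L: "\<bar>u2\<bar> \<le> L"
  proof -
    have e: "\<bar>lam * v / (1-p)\<bar> = L * (\<delta> * \<bar>v\<bar> / (1-p))" unfolding lam_def using pp L0 d0
      by (simp add: abs_mult abs_divide)
    have "\<delta> * \<bar>v\<bar> \<le> \<delta>" using v d0 by (simp add: mult_left_le)
    hence "\<delta> * \<bar>v\<bar> \<le> (1-p)" using p1 by linarith
    hence "\<delta> * \<bar>v\<bar> / (1-p) \<le> 1" using pp by (simp add: divide_le_eq)
    hence "L * (\<delta> * \<bar>v\<bar> / (1-p)) \<le> L * 1" using L0 by (intro mult_left_mono) auto
    thus ?thesis using e unfolding u2_def by simp
  qed
  have b1: "exp u1 \<le> 1 + u1 + u1^2 * K" using exp_quad_bound[OF u1L L0] unfolding K_def .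
  have b2: "exp u2 \<le> 1 + u2 + u2^2 * K" using exp_quad_bound[OF u2L L0] unfolding K_def .
  have "1 + L \<le> exp L" by (rule exp_ge_add_one_self)
  hence "0 \<le> exp L - 1 - L" by linarith
  hence K0: "0 \<le> K" unfolding K_def by (rule divide_nonneg_nonneg) simp
  have inv: "1/p + 1/(1-p) \<le> 2 / \<delta>"
  proof -
    have "1/p + 1/(1-p) = 1 / (p * (1-p))" using pp by (simp add: field_simps)
    moreover have dp: "\<delta> / 2 \<le> p * (1-p)"
    proof -
      have "0 \<le> (p - \<delta>) * (1 - \<delta> - p)" using p0 p1 by simp
      hence "\<delta> * (1 - \<delta>) \<le> p * (1-p)" by (simp add: algebra_simps)
      moreover have "\<delta> / 2 \<le> \<delta> * (1 - \<delta>)" using d0 d1 by simp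
      ultimately show ?thesis by linarith
    qed
    moreover have "1 / (p * (1-p)) \<le> 1 / (\<delta>/2)"
      by (rule divide_left_mono[OF dp]) (use pp d0 in auto)
    ultimately show ?thesis by simp
  qed
  have "p * exp u1 + (1-p) * exp u2 \<le> p * (1 + u1 + u1^2 * K) + (1-p) * (1 + u2 + u2^2 * K)"
    using b1 b2 pp by (intro add_mono mult_left_mono) auto
  also have "\<dots> = 1 + K * lam^2 * v^2 * (1/p + 1/(1-p))"
  proof -
    have a1: "p * u1 = - (lam * v)" "p * u1^2 = (lam * v)^2 / p" unfolding u1_def using pp
      by (simp_all add: power2_eq_square)
    have a2: "(1-p) * u2 = lam * v" "(1-p) * u2^2 = (lam * v)^2 / (1-p)" unfolding u2_def using pp
      by (simp_all add: power2_eq_square)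
    have "p * (1 + u1 + u1^2 * K) + (1-p) * (1 + u2 + u2^2 * K)
        = 1 + (p * u1 + (1-p) * u2) + K * (p * u1^2 + (1-p) * u2^2)" by (simp add: algebra_simps)
    also have "\<dots> = 1 + K * ((lam*v)^2/p + (lam*v)^2/(1-p))" using a1 a2 by simp
    also have "\<dots> = 1 + K * lam^2 * v^2 * (1/p + 1/(1-p))" by (simp add: algebra_simps power_mult_distrib)
    finally show ?thesis .
  qed
  also have "\<dots> \<le> 1 + K * lam^2 * v^2 * (2/\<delta>)"
    using mult_left_mono[OF inv, of "K * lam^2 * v^2"] K0 by simp
  also have "K * lam^2 * v^2 * (2/\<delta>) = 2 * \<delta> * (c/2 - L) * v^2"
  proof -
    have "K * lam^2 = (c/2 - L) * \<delta>^2" unfolding K_def lam_def eL using L0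
      by (simp add: power_mult_distrib)
    thus ?thesis using d0 by (simp add: power2_eq_square)
  qed
  also have "2 * \<delta> * (c/2 - L) * v^2 \<le> lam * c * v^2"
  proof -
    have "c - 2 * L \<le> c * L" using ln_lower[OF c] unfolding L_def by (simp add: algebra_simps)
    hence "\<delta> * v^2 * (c - 2 * L) \<le> \<delta> * v^2 * (c * L)" using d0 by (simp add: mult_left_mono)
    thus ?thesis unfolding lam_def by (simp add: algebra_simps)
  qed
  finally have A: "p * exp u1 + (1-p) * exp u2 \<le> 1 + lam * c * v^2" by simp
  have B: "1 + lam * c * v^2 \<le> exp (lam * c * v^2)" by (rule exp_ge_add_one_self)
  have e1: "exp (lam * (- inverse p * v - c * v^2)) = exp (- (lam * c * v^2)) * exp u1"
    unfolding u1_def by (simp add: exp_add[symmetric] algebra_simps divide_inverse)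
  have e2: "exp (lam * (inverse (1-p) * v - c * v^2)) = exp (- (lam * c * v^2)) * exp u2"
    unfolding u2_def by (simp add: exp_add[symmetric] algebra_simps divide_inverse)
  have "p * exp (lam * (- inverse p * v - c * v^2)) + (1-p) * exp (lam * (inverse (1-p) * v - c * v^2))
     = exp (- (lam * c * v^2)) * (p * exp u1 + (1-p) * exp u2)"
    unfolding e1 e2 by (simp add: algebra_simps)
  also have "\<dots> \<le> exp (- (lam * c * v^2)) * exp (lam * c * v^2)"
  proof -
    have AB: "p * exp u1 + (1-p) * exp u2 \<le> exp (lam * c * v^2)" using A B by linarith
    show ?thesis by (rule mult_left_mono[OF AB]) simp
  qed
  also have "\<dots> = 1" by (simp add: exp_minus)
  finally show ?thesis unfolding lam_def L_def .
qed



lemma fin_len: "finite {y :: bool list. length y = m}"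
  using finite_lists_length_eq[of "UNIV :: bool set" m] by simp

lemma sum_len_Suc:
  "(\<Sum>y\<in>{y :: bool list. length y = Suc m}. F y) = (\<Sum>y\<in>{y. length y = m}. F (y @ [True]) + F (y @ [False]))"
proof -
  let ?L = "{y :: bool list. length y = m}"
  have eq: "{y :: bool list. length y = Suc m} = (\<lambda>y. y @ [True]) ` ?L \<union> (\<lambda>y. y @ [False]) ` ?L"
  proof (rule set_eqI, rule iffI)
    fix y :: "bool list" assume "y \<in> {y. length y = Suc m}"
    then obtain z b where "y = z @ [b]" "length z = m"
      by (metis (mono_tags) length_Suc_conv_rev mem_Collect_eq)
    thus "y \<in> (\<lambda>y. y @ [True]) ` ?L \<union> (\<lambda>y. y @ [False]) ` ?L" by (cases b) auto
  qed auto
  have "(\<Sum>y\<in>{y :: bool list. length y = Suc m}. F y)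
      = (\<Sum>y\<in>(\<lambda>y. y @ [True]) ` ?L. F y) + (\<Sum>y\<in>(\<lambda>y. y @ [False]) ` ?L. F y)"
    unfolding eq by (rule sum.union_disjoint) (auto simp: fin_len)
  also have "\<dots> = (\<Sum>y\<in>?L. F (y @ [True])) + (\<Sum>y\<in>?L. F (y @ [False]))"
    by (subst sum.reindex, simp add: inj_on_def)+ simp
  also have "\<dots> = (\<Sum>y\<in>?L. F (y @ [True]) + F (y @ [False]))" by (simp add: sum.distrib)
  finally show ?thesis .
qed

lemma take_app: "t \<le> length y \<Longrightarrow> take t (y @ [b]) = take t y" by simp
lemma nth_app: "t < length y \<Longrightarrow> (y @ [b]) ! t = y ! t" by (simp add: nth_append)

lemma pp_Suc:
  assumes "length y = m"
  shows "path_prob (Suc m) p (y @ [b]) = path_prob m p y * (if b then p m y else 1 - p m y)"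
proof -
  have "(\<Prod>t<m. if (y@[b]) ! t then p t (take t (y@[b])) else 1 - p t (take t (y@[b])))
      = (\<Prod>t<m. if y ! t then p t (take t y) else 1 - p t (take t y))"
    using assms by (intro prod.cong) (auto simp: nth_append)
  thus ?thesis unfolding path_prob_def using assms by (simp add: nth_append)
qed

lemma pp_facts:
  assumes "\<forall>t ys. t < m \<and> length ys = t \<longrightarrow> 0 \<le> p t ys \<and> p t ys \<le> 1"
  shows "(\<forall>y. length y = m \<longrightarrow> 0 \<le> path_prob m p y) \<and> (\<Sum>y\<in>{y. length y = m}. path_prob m p y) = 1"
  using assms
proof (induction m)
  case 0
  have "{y :: bool list. length y = 0} = {[]}" by auto
  thus ?case by (simp add: path_prob_def)
next
  case (Suc m)
  hence IH: "(\<forall>y. length y = m \<longrightarrow> 0 \<le> path_prob m p y) \<and> (\<Sum>y\<in>{y. length y = m}. path_prob m p y) = 1"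
    by simp
  have pm: "length y = m \<Longrightarrow> 0 \<le> p m y \<and> p m y \<le> 1" for y using Suc.prems by auto
  have "0 \<le> path_prob (Suc m) p y" if ly: "length y = Suc m" for y
  proof -
    obtain z b where "y = z @ [b]" "length z = m"
      using ly unfolding length_Suc_conv_rev by blast
    moreover have "0 \<le> path_prob m p z" using IH \<open>length z = m\<close> by blast
    ultimately show ?thesis using pp_Suc[of z m p b] pm[of z] by simp
  qed
  moreover have "(\<Sum>y\<in>{y. length y = Suc m}. path_prob (Suc m) p y) = 1"
  proof -
    have "(\<Sum>y\<in>{y. length y = Suc m}. path_prob (Suc m) p y)
        = (\<Sum>y\<in>{y. length y = m}. path_prob m p y)"
      unfolding sum_len_Suc by (rule sum.cong) (auto simp: pp_Suc algebra_simps)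
    thus ?thesis using IH by simp
  qed
  ultimately show ?case by blast
qed



definition st :: "real \<Rightarrow> real \<Rightarrow> (nat \<Rightarrow> bool list \<Rightarrow> real) \<Rightarrow> (nat \<Rightarrow> bool list \<Rightarrow> real) \<Rightarrow> nat \<Rightarrow> bool list \<Rightarrow> real" where
  "st \<delta> c p v t y = (if \<delta> \<le> p t (take t y) \<and> p t (take t y) \<le> 1 - \<delta>
     then eta (p t (take t y)) (y ! t) * v t (take t y) - c * (v t (take t y))\<^sup>2 else 0)"

lemma st_app: "t < length y \<Longrightarrow> st \<delta> c p v t (y @ [b]) = st \<delta> c p v t y"
  unfolding st_def by (simp add: nth_append)

lemma st_last: "st \<delta> c p v (length y) (y @ [b]) = (if \<delta> \<le> p (length y) y \<and> p (length y) y \<le> 1 - \<delta>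
     then eta (p (length y) y) b * v (length y) y - c * (v (length y) y)\<^sup>2 else 0)"
  unfolding st_def by simp

lemma one_step:
  assumes d0: "0 < \<delta>" and d1: "\<delta> < 1/2" and c: "0 < c" and q: "0 \<le> q" "q \<le> 1" and v: "\<bar>w\<bar> \<le> 1"
  shows "q * exp ((\<delta> * ln (1 + c/2)) * (if \<delta> \<le> q \<and> q \<le> 1 - \<delta> then eta q True * w - c * w\<^sup>2 else 0))
       + (1 - q) * exp ((\<delta> * ln (1 + c/2)) * (if \<delta> \<le> q \<and> q \<le> 1 - \<delta> then eta q False * w - c * w\<^sup>2 else 0)) \<le> 1"
proof (cases "\<delta> \<le> q \<and> q \<le> 1 - \<delta>")
  case True
  thus ?thesis using key_step[OF d0 d1 _ _ v c, of q] by (simp add: eta_def)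
next
  case False
  show ?thesis by (subst if_not_P[OF False])+ simp
qed

lemma mart:
  assumes d0: "0 < \<delta>" and d1: "\<delta> < 1/2" and c: "0 < c"
    and hp: "\<forall>t ys. t < m \<and> length ys = t \<longrightarrow> 0 \<le> p t ys \<and> p t ys \<le> 1"
    and hv: "\<forall>t ys. t < m \<and> length ys = t \<longrightarrow> \<bar>v t ys\<bar> \<le> 1"
  shows "(\<Sum>y\<in>{y. length y = m}. path_prob m p y * exp ((\<delta> * ln (1 + c/2)) * (\<Sum>t<m. st \<delta> c p v t y))) \<le> 1"
  using hp hv
proof (induction m)
  case 0
  have "{y :: bool list. length y = 0} = {[]}" by auto
  thus ?case by (simp add: path_prob_def)
next
  case (Suc m)
  define lam where "lam = \<delta> * ln (1 + c/2)"
  have IH: "(\<Sum>y\<in>{y. length y = m}. path_prob m p y * exp (lam * (\<Sum>t<m. st \<delta> c p v t y))) \<le> 1"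
    unfolding lam_def using Suc by simp
  have PP: "(\<forall>y. length y = m \<longrightarrow> 0 \<le> path_prob m p y)"
    using pp_facts[of m p] Suc.prems by simp
  have hterm: "path_prob (Suc m) p (y @ [True]) * exp (lam * (\<Sum>t<Suc m. st \<delta> c p v t (y @ [True])))
     + path_prob (Suc m) p (y @ [False]) * exp (lam * (\<Sum>t<Suc m. st \<delta> c p v t (y @ [False])))
     \<le> path_prob m p y * exp (lam * (\<Sum>t<m. st \<delta> c p v t y))" if ly: "length y = m" for y
  proof -
    have S: "(\<Sum>t<Suc m. st \<delta> c p v t (y @ [b])) = (\<Sum>t<m. st \<delta> c p v t y) + st \<delta> c p v m (y @ [b])" for b
    proof -
      have "(\<Sum>t<m. st \<delta> c p v t (y @ [b])) = (\<Sum>t<m. st \<delta> c p v t y)"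
        using ly by (intro sum.cong) (auto simp: st_app)
      thus ?thesis by simp
    qed
    define X where "X = path_prob m p y * exp (lam * (\<Sum>t<m. st \<delta> c p v t y))"
    have X0: "0 \<le> X" unfolding X_def using PP ly by simp
    have q: "0 \<le> p m y" "p m y \<le> 1" using Suc.prems ly by auto
    have w: "\<bar>v m y\<bar> \<le> 1" using Suc.prems ly by auto
    have os: "p m y * exp (lam * st \<delta> c p v m (y @ [True])) + (1 - p m y) * exp (lam * st \<delta> c p v m (y @ [False])) \<le> 1"
    proof -
      have stT: "st \<delta> c p v m (y @ [b]) = (if \<delta> \<le> p m y \<and> p m y \<le> 1 - \<delta>
        then eta (p m y) b * v m y - c * (v m y)\<^sup>2 else 0)" for b
        using st_last[of \<delta> c p v y b] ly by simp
      show ?thesis unfolding lam_def stT by (rule one_step[OF d0 d1 c q w])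
    qed
    have "path_prob (Suc m) p (y @ [True]) * exp (lam * (\<Sum>t<Suc m. st \<delta> c p v t (y @ [True])))
     + path_prob (Suc m) p (y @ [False]) * exp (lam * (\<Sum>t<Suc m. st \<delta> c p v t (y @ [False])))
      = X * (p m y * exp (lam * st \<delta> c p v m (y @ [True])) + (1 - p m y) * exp (lam * st \<delta> c p v m (y @ [False])))"
      unfolding S X_def using ly by (simp add: pp_Suc exp_add distrib_left algebra_simps)
    also have "\<dots> \<le> X * 1" using os X0 by (rule mult_left_mono)
    finally show ?thesis unfolding X_def by simp
  qed
  have "(\<Sum>y\<in>{y. length y = Suc m}. path_prob (Suc m) p y * exp (lam * (\<Sum>t<Suc m. st \<delta> c p v t y)))
     \<le> (\<Sum>y\<in>{y. length y = m}. path_prob m p y * exp (lam * (\<Sum>t<m. st \<delta> c p v t y)))"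
    unfolding sum_len_Suc by (rule sum_mono) (use hterm in auto)
  also have "\<dots> \<le> 1" by (rule IH)
  finally show ?case unfolding lam_def .
qed



lemma main_gen:
  fixes \<delta> c :: real and n :: nat and V :: "(nat \<Rightarrow> bool list \<Rightarrow> real) set"
  assumes d0: "0 < \<delta>" and d1: "\<delta> < 1/2"
    and fV: "finite V" and nV: "V \<noteq> {}"
    and rV: "\<forall>v\<in>V. real_tree n (-1) 1 v"
    and c: "0 < c"
    and hp: "\<forall>t ys. tree_dom n t ys \<longrightarrow> 0 \<le> p t ys \<and> p t ys \<le> 1"
  shows "tree_expect n p (\<lambda>y. Max ((\<lambda>v. \<Sum>t<n. st \<delta> c p v t y) ` V))
     \<le> ln (real (card V)) / (\<delta> * ln (1 + c / 2))"
proof -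
  define lam where "lam = \<delta> * ln (1 + c/2)"
  have lam0: "0 < lam" unfolding lam_def using d0 c by simp
  define S where "S v y = (\<Sum>t<n. st \<delta> c p v t y)" for v y
  define Z where "Z y = (\<Sum>v\<in>V. exp (lam * S v y))" for y
  define L where "L = {y :: bool list. length y = n}"
  define w where "w y = path_prob n p y" for y
  have hp': "\<forall>t ys. t < n \<and> length ys = t \<longrightarrow> 0 \<le> p t ys \<and> p t ys \<le> 1"
    using hp unfolding tree_dom_def by auto
  have hv: "\<forall>t ys. t < n \<and> length ys = t \<longrightarrow> \<bar>v t ys\<bar> \<le> 1" if "v \<in> V" for v
    using rV that unfolding real_tree_def tree_dom_def by (auto simp: abs_le_iff)
  have fL: "finite L" unfolding L_def by (rule fin_len)
  have w0: "\<And>y. y \<in> L \<Longrightarrow> 0 \<le> w y" and w1: "(\<Sum>y\<in>L. w y) = 1"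
    using pp_facts[OF hp'] unfolding w_def L_def by auto
  have Z0: "0 < Z y" for y unfolding Z_def using fV nV by (intro sum_pos) auto
  have maxb: "Max ((\<lambda>v. S v y) ` V) \<le> ln (Z y) / lam" for y
  proof -
    have "Max ((\<lambda>v. S v y) ` V) \<in> (\<lambda>v. S v y) ` V" using fV nV by (intro Max_in) auto
    then obtain v0 where v0: "v0 \<in> V" "Max ((\<lambda>v. S v y) ` V) = S v0 y" by auto
    have "exp (lam * S v0 y) \<le> Z y" unfolding Z_def
      using fV v0(1) by (intro member_le_sum) auto
    hence "ln (exp (lam * S v0 y)) \<le> ln (Z y)" using Z0 by (subst ln_le_cancel_iff) auto
    hence "lam * S v0 y \<le> ln (Z y)" by simp
    hence "S v0 y \<le> ln (Z y) / lam" using lam0 by (simp add: field_simps)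
    thus ?thesis using v0 by simp
  qed
  define M where "M = (\<Sum>y\<in>L. w y * Z y)"
  have MV: "M \<le> real (card V)"
  proof -
    have "M = (\<Sum>v\<in>V. \<Sum>y\<in>L. w y * exp (lam * S v y))"
      unfolding M_def Z_def by (simp add: sum_distrib_left sum.swap[of _ L V])
    also have "\<dots> \<le> (\<Sum>v\<in>V. 1)"
    proof (rule sum_mono)
      fix v assume "v \<in> V"
      show "(\<Sum>y\<in>L. w y * exp (lam * S v y)) \<le> 1"
        using mart[OF d0 d1 c hp' hv[OF \<open>v \<in> V\<close>]] unfolding w_def L_def S_def lam_def .
    qed
    finally show ?thesis by simp
  qed
  have M0: "0 < M"
  proof -
    have "\<exists>y\<in>L. 0 < w y"
    proof (rule ccontr)
      assume "\<not> ?thesis"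
      hence "\<forall>y\<in>L. w y \<le> 0" by auto
      hence "(\<Sum>y\<in>L. w y) \<le> 0" by (intro sum_nonpos) auto
      thus False using w1 by simp
    qed
    then obtain y0 where "y0 \<in> L" "0 < w y0" by auto
    thus ?thesis unfolding M_def using fL w0 Z0
      by (intro sum_pos2[of L y0]) (auto intro: mult_nonneg_nonneg less_imp_le)
  qed
  have lnb: "ln (Z y) \<le> ln M + Z y / M - 1" for y
  proof -
    have "ln (Z y / M) \<le> Z y / M - 1" using Z0 M0 by (intro ln_le_minus_one) simp
    moreover have "ln (Z y / M) = ln (Z y) - ln M" using Z0[of y] M0 by (simp add: ln_div)
    ultimately show ?thesis by simp
  qed
  have "tree_expect n p (\<lambda>y. Max ((\<lambda>v. \<Sum>t<n. st \<delta> c p v t y) ` V))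
      = (\<Sum>y\<in>L. w y * Max ((\<lambda>v. S v y) ` V))"
    unfolding tree_expect_def w_def L_def S_def ..
  also have "\<dots> \<le> (\<Sum>y\<in>L. w y * (ln (Z y) / lam))"
    using w0 maxb by (intro sum_mono mult_left_mono) auto
  also have "\<dots> = (\<Sum>y\<in>L. w y * ln (Z y)) / lam" by (simp add: sum_divide_distrib)
  also have "(\<Sum>y\<in>L. w y * ln (Z y)) \<le> (\<Sum>y\<in>L. w y * (ln M + Z y / M - 1))"
    using w0 lnb by (intro sum_mono mult_left_mono) auto
  also have "\<dots> = (ln M - 1) * (\<Sum>y\<in>L. w y) + (\<Sum>y\<in>L. w y * Z y) / M"
    by (simp add: algebra_simps sum.distrib sum_distrib_left sum_divide_distrib sum_subtractf)
  also have "\<dots> = ln M" using w1 M0 unfolding M_def[symmetric] by simp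
  finally have "tree_expect n p (\<lambda>y. Max ((\<lambda>v. \<Sum>t<n. st \<delta> c p v t y) ` V)) \<le> ln M / lam"
    using lam0 by (simp add: divide_right_mono)
  also have "ln M \<le> ln (real (card V))" using M0 MV by simp
  hence "ln M / lam \<le> ln (real (card V)) / lam" using lam0 by (simp add: divide_right_mono)
  finally show ?thesis unfolding lam_def .
qed

theorem lemma1:
  fixes \<delta> c :: real and n :: nat and V :: "(nat \<Rightarrow> bool list \<Rightarrow> real) set"
  assumes "0 < \<delta>" "\<delta> < 1/2"
    and "finite V" "V \<noteq> {}"
    and "\<forall>v\<in>V. real_tree n (-1) 1 v"
    and "0 < c"
  shows "(\<forall>p. (\<forall>t ys. tree_dom n t ys \<longrightarrow> \<delta> \<le> p t ys \<and> p t ys \<le> 1 - \<delta>) \<longrightarrow>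
            tree_expect n p (\<lambda>y. Max ((\<lambda>v. \<Sum>t<n.
                 eta (p t (take t y)) (y ! t) * v t (take t y) - c * (v t (take t y))\<^sup>2) ` V))
            \<le> ln (real (card V)) / (\<delta> * ln (1 + c / 2)))
       \<and> (\<forall>p. (\<forall>t ys. tree_dom n t ys \<longrightarrow> 0 \<le> p t ys \<and> p t ys \<le> 1) \<longrightarrow>
            tree_expect n p (\<lambda>y. Max ((\<lambda>v. \<Sum>t\<in>{t. t < n \<and> \<delta> \<le> p t (take t y) \<and> p t (take t y) \<le> 1 - \<delta>}.
                 eta (p t (take t y)) (y ! t) * v t (take t y) - c * (v t (take t y))\<^sup>2) ` V))
            \<le> ln (real (card V)) / (\<delta> * ln (1 + c / 2)))"
  proof (intro conjI allI impI)
  fix p :: "nat \<Rightarrow> bool list \<Rightarrow> real"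
  assume hd: "\<forall>t ys. tree_dom n t ys \<longrightarrow> \<delta> \<le> p t ys \<and> p t ys \<le> 1 - \<delta>"
  have hp: "\<forall>t ys. tree_dom n t ys \<longrightarrow> 0 \<le> p t ys \<and> p t ys \<le> 1"
  proof (intro allI impI)
    fix t ys assume "tree_dom n t ys"
    thus "0 \<le> p t ys \<and> p t ys \<le> 1" using hd assms(1) by fastforce
  qed
  have "tree_expect n p (\<lambda>y. Max ((\<lambda>v. \<Sum>t<n.
                 eta (p t (take t y)) (y ! t) * v t (take t y) - c * (v t (take t y))\<^sup>2) ` V))
      = tree_expect n p (\<lambda>y. Max ((\<lambda>v. \<Sum>t<n. st \<delta> c p v t y) ` V))"
    unfolding tree_expect_def
  proof (rule sum.cong[OF refl])
    fix y :: "bool list" assume "y \<in> {y. length y = n}"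
    hence ly: "length y = n" by simp
    have inner: "(\<Sum>t<n. eta (p t (take t y)) (y ! t) * v t (take t y) - c * (v t (take t y))\<^sup>2)
        = (\<Sum>t<n. st \<delta> c p v t y)" for v :: "nat \<Rightarrow> bool list \<Rightarrow> real"
    proof (rule sum.cong[OF refl])
      fix t assume "t \<in> {..<n}"
      hence "tree_dom n t (take t y)" using ly unfolding tree_dom_def by auto
      thus "eta (p t (take t y)) (y ! t) * v t (take t y) - c * (v t (take t y))\<^sup>2 = st \<delta> c p v t y"
        using hd unfolding st_def by auto
    qed
    show "path_prob n p y * Max ((\<lambda>v. \<Sum>t<n. eta (p t (take t y)) (y ! t) * v t (take t y) - c * (v t (take t y))\<^sup>2) ` V)
        = path_prob n p y * Max ((\<lambda>v. \<Sum>t<n. st \<delta> c p v t y) ` V)"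
      by (simp only: inner)
  qed
  also have "\<dots> \<le> ln (real (card V)) / (\<delta> * ln (1 + c / 2))"
    by (rule main_gen[OF assms(1-6) hp])
  finally show "tree_expect n p (\<lambda>y. Max ((\<lambda>v. \<Sum>t<n.
                 eta (p t (take t y)) (y ! t) * v t (take t y) - c * (v t (take t y))\<^sup>2) ` V))
            \<le> ln (real (card V)) / (\<delta> * ln (1 + c / 2))" .
next
  fix p :: "nat \<Rightarrow> bool list \<Rightarrow> real"
  assume hp: "\<forall>t ys. tree_dom n t ys \<longrightarrow> 0 \<le> p t ys \<and> p t ys \<le> 1"
  have eq: "(\<lambda>y. Max ((\<lambda>v. \<Sum>t\<in>{t. t < n \<and> \<delta> \<le> p t (take t y) \<and> p t (take t y) \<le> 1 - \<delta>}.
                 eta (p t (take t y)) (y ! t) * v t (take t y) - c * (v t (take t y))\<^sup>2) ` V))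
     = (\<lambda>y. Max ((\<lambda>v. \<Sum>t<n. st \<delta> c p v t y) ` V))"
  proof (intro ext arg_cong[where f=Max] image_cong refl)
    fix y :: "bool list" and v :: "nat \<Rightarrow> bool list \<Rightarrow> real"
    have seq: "{t. t < n \<and> \<delta> \<le> p t (take t y) \<and> p t (take t y) \<le> 1 - \<delta>}
        = {t \<in> {..<n}. \<delta> \<le> p t (take t y) \<and> p t (take t y) \<le> 1 - \<delta>}" by auto
    show "(\<Sum>t\<in>{t. t < n \<and> \<delta> \<le> p t (take t y) \<and> p t (take t y) \<le> 1 - \<delta>}.
                 eta (p t (take t y)) (y ! t) * v t (take t y) - c * (v t (take t y))\<^sup>2)
        = (\<Sum>t<n. st \<delta> c p v t y)"
      unfolding st_def seq by (rule sum.inter_filter) simp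
  qed
  show "tree_expect n p (\<lambda>y. Max ((\<lambda>v. \<Sum>t\<in>{t. t < n \<and> \<delta> \<le> p t (take t y) \<and> p t (take t y) \<le> 1 - \<delta>}.
                 eta (p t (take t y)) (y ! t) * v t (take t y) - c * (v t (take t y))\<^sup>2) ` V))
            \<le> ln (real (card V)) / (\<delta> * ln (1 + c / 2))"
    unfolding eq by (rule main_gen[OF assms(1-6) hp])
qed

end
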